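(* Let $k\ge 2$, let $\lambda_1,\ldots,\lambda_k$ be nonzero integers with $\gcd(\lambda_1,\ldots,\lambda_k)=1$, and $g_i=\gcd(\lambda_j:j\ne i)$. Let $A\subset\mathbb{Z}$ be a finite reduced set. For each $1\le i\le k$ write $A$ as the disjoint union $A=\bigcup_{j=1}^{m_i}A_{ij}$ of its nonempty intersections with residue classes mod $g_i$, where $A_{ij}=a_{ij}+g_i\cdot A'_{ij}$ with $0\le a_{ij}<g_i$ and $A'_{ij}\subset\mathbb{Z}$. Fix $1\le i\le k$ and $1\le j\le m_i$. Then either $A'_{ij}$ is fully distributed mod $g_i$, or $$\big|\lambda_1\cdot A+\cdots+\lambda_{i-1}\cdot A+\lambda_i\cdot A_{ij}+\lambda_{i+1}\cdot A+\cdots+\lambda_k\cdot A\big|\ \ge\ |\lambda_1\cdot A_{ij}+\cdots+\lambda_k\cdot A_{ij}|+\min_{1\le w\le m_i}|A_{iw}|.$$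
   Context: For an integer $d$ and a finite set $A$, $d\cdot A=\{da:a\in A\}$, $x+A=\{x+a:a\in A\}$; sums of sets are Minkowski sums. A set $A\subset\mathbb{Z}$ is fully distributed (FD) mod $q$ if it intersects every residue class mod $q$. A finite set $A\subset\mathbb{Z}$ is reduced if it is not contained in any proper infinite arithmetic progression, i.e. there is no $a\in\mathbb{Z}$ and integer $d\ge 2$ with $A\subset a+d\mathbb{Z}$ (equivalently, $|A|\ge2$ and the differences of elements of $A$ have gcd 1). *)

theory Defs
  imports "HOL-Number_Theory.Number_Theory"
begin

definition dilate :: "int \<Rightarrow> int set \<Rightarrow> int set" where
  "dilate d A = (\<lambda>a. d * a) ` A"

definition sumset :: "int set \<Rightarrow> int set \<Rightarrow> int set" where
  "sumset A B = {a + b | a b. a \<in> A \<and> b \<in> B}"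

fun msum :: "nat \<Rightarrow> (nat \<Rightarrow> int set) \<Rightarrow> int set" where
  "msum 0 S = {0}"
| "msum (Suc n) S = sumset (msum n S) (S (Suc n))"

definition fully_distributed :: "int set \<Rightarrow> int \<Rightarrow> bool" where
  "fully_distributed A q \<longleftrightarrow> (\<forall>r. \<exists>a\<in>A. [a = r] (mod q))"

definition reduced :: "int set \<Rightarrow> bool" where
  "reduced A \<longleftrightarrow> \<not> (\<exists>a d. d \<ge> 2 \<and> A \<subseteq> {x. [x = a] (mod d)})"

end

theory Submission
  imports Defs
begin


lemma msum_mem:
  "x \<in> msum n S \<longleftrightarrow> (\<exists>c. (\<forall>l\<in>{1..n}. c l \<in> S l) \<and> x = (\<Sum>l=1..n. c l))"
proof (induction n arbitrary: x)
  case 0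
  then show ?case by auto
next
  case (Suc n)
  show ?case
  proof
    assume "x \<in> msum (Suc n) S"
    then obtain y z where y: "y \<in> msum n S" and z: "z \<in> S (Suc n)" and x: "x = y + z"
      by (auto simp: sumset_def)
    from y Suc obtain c where c: "\<forall>l\<in>{1..n}. c l \<in> S l" "y = (\<Sum>l=1..n. c l)" by blast
    let ?c = "c(Suc n := z)"
    have "(\<Sum>l=1..n. ?c l) = (\<Sum>l=1..n. c l)" by (rule sum.cong) auto
    hence "x = (\<Sum>l=1..Suc n. ?c l)" using x c by simp
    moreover have "\<forall>l\<in>{1..Suc n}. ?c l \<in> S l" using c z by auto
    ultimately show "\<exists>c. (\<forall>l\<in>{1..Suc n}. c l \<in> S l) \<and> x = (\<Sum>l=1..Suc n. c l)" by blast
  next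
    assume "\<exists>c. (\<forall>l\<in>{1..Suc n}. c l \<in> S l) \<and> x = (\<Sum>l=1..Suc n. c l)"
    then obtain c where c: "\<forall>l\<in>{1..Suc n}. c l \<in> S l" "x = (\<Sum>l=1..Suc n. c l)" by blast
    have "\<forall>l\<in>{1..n}. c l \<in> S l" using c by auto
    hence "(\<Sum>l=1..n. c l) \<in> msum n S" using Suc.IH by blast
    moreover have "c (Suc n) \<in> S (Suc n)" using c by auto
    moreover have "x = (\<Sum>l=1..n. c l) + c (Suc n)" using c by simp
    ultimately show "x \<in> msum (Suc n) S" by (auto simp: sumset_def)
  qed
qed

lemma msum_dilate:
  "x \<in> msum n (\<lambda>l. dilate (lam l) (X l)) \<longleftrightarrow>
     (\<exists>a. (\<forall>l\<in>{1..n}. a l \<in> X l) \<and> x = (\<Sum>l=1..n. lam l * a l))"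
proof
  assume "x \<in> msum n (\<lambda>l. dilate (lam l) (X l))"
  then obtain c where c: "\<forall>l\<in>{1..n}. c l \<in> dilate (lam l) (X l)" "x = (\<Sum>l=1..n. c l)"
    unfolding msum_mem by blast
  hence "\<forall>l\<in>{1..n}. \<exists>y. y \<in> X l \<and> c l = lam l * y" by (auto simp: dilate_def)
  then obtain a where a: "\<forall>l\<in>{1..n}. a l \<in> X l \<and> c l = lam l * a l" by metis
  have "x = (\<Sum>l=1..n. lam l * a l)" using c(2) a by (auto intro: sum.cong)
  thus "\<exists>a. (\<forall>l\<in>{1..n}. a l \<in> X l) \<and> x = (\<Sum>l=1..n. lam l * a l)" using a by blast
next
  assume "\<exists>a. (\<forall>l\<in>{1..n}. a l \<in> X l) \<and> x = (\<Sum>l=1..n. lam l * a l)"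
  then obtain a where a: "\<forall>l\<in>{1..n}. a l \<in> X l" "x = (\<Sum>l=1..n. lam l * a l)" by blast
  show "x \<in> msum n (\<lambda>l. dilate (lam l) (X l))" unfolding msum_mem
    by (rule exI[of _ "\<lambda>l. lam l * a l"]) (use a in \<open>auto simp: dilate_def\<close>)
qed

lemma msum_finite: "(\<forall>l\<in>{1..n}. finite (S l)) \<Longrightarrow> finite (msum n S)"
proof (induction n)
  case 0 then show ?case by simp
next
  case (Suc n)
  have "sumset (msum n S) (S (Suc n)) = (\<lambda>(a,b). a+b) ` (msum n S \<times> S (Suc n))"
    by (auto simp: sumset_def)
  then show ?case using Suc by auto
qed



lemma closure_all:
  fixes P E :: "int set" and n :: int
  assumes n: "n > 0" and per: "\<And>w m. w \<in> P \<Longrightarrow> w + n*m \<in> P"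
    and cl: "\<And>w e. w \<in> P \<Longrightarrow> e \<in> E \<Longrightarrow> w + e \<in> P"
    and gen: "\<And>d. d > 0 \<Longrightarrow> (\<forall>e\<in>E. d dvd e) \<Longrightarrow> d = 1"
    and ne: "P \<noteq> {}"
  shows "z \<in> P"
proof -
  define D where "D = {e. \<forall>w\<in>P. w + e \<in> P}"
  have add: "e1 + e2 \<in> D" if "e1 \<in> D" "e2 \<in> D" for e1 e2
    using that unfolding D_def by (simp add: add.assoc[symmetric])
  have nm: "n*m \<in> D" for m using per unfolding D_def by blast
  have natm: "int j * e \<in> D" if "e \<in> D" for j e
  proof (induction j)
    case 0 then show ?case using nm[of 0] by simp
  next
    case (Suc j) then show ?case using add[OF Suc that] by (simp add: algebra_simps)
  qed
  have neg: "- e \<in> D" if "e \<in> D" for e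
  proof -
    have "- e = int (nat (n-1)) * e + n * (-e)" using n by (simp add: algebra_simps)
    have "int (nat (n-1)) * e + n * (-e) \<in> D" using add[OF natm[OF that] nm] by blast
    thus ?thesis by (metis \<open>- e = int (nat (n-1)) * e + n * (-e)\<close>)
  qed
  have intm: "m * e \<in> D" if "e \<in> D" for m e
  proof (cases "m \<ge> 0")
    case True then show ?thesis using natm[OF that, of "nat m"] by simp
  next
    case False
    have "m * e = - (int (nat (-m)) * e)" using False by simp
    then show ?thesis using neg[OF natm[OF that, of "nat (-m)"]] by simp
  qed
  have ED: "E \<subseteq> D" using cl unfolding D_def by blast
  define d where "d = int (LEAST j::nat. j > 0 \<and> int j \<in> D)"
  have ex: "nat n > 0 \<and> int (nat n) \<in> D" using n nm[of 1] by simp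
  have dD: "d > 0 \<and> d \<in> D" unfolding d_def using LeastI[of "\<lambda>j. j > 0 \<and> int j \<in> D", OF ex] by simp
  have dvdD: "d dvd x" if "x \<in> D" for x
  proof -
    have "x mod d = x + (- (x div d)) * d" by (simp add: algebra_simps minus_div_mult_eq_mod[symmetric])
    moreover have "x + (- (x div d)) * d \<in> D" using add[OF that intm[OF conjunct2[OF dD]]] by blast
    ultimately have xm: "x mod d \<in> D" by simp
    have "x mod d = 0"
    proof (rule ccontr)
      assume "x mod d \<noteq> 0"
      hence pos: "nat (x mod d) > 0" using dD by (simp add: order_le_neq_trans)
      hence "(LEAST j::nat. j > 0 \<and> int j \<in> D) \<le> nat (x mod d)"
        using xm dD by (intro Least_le) simp
      hence "d \<le> int (nat (x mod d))" unfolding d_def by linarith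
      hence "d \<le> x mod d" using dD by simp
      moreover have "x mod d < d" using dD by simp
      ultimately show False by simp
    qed
    thus ?thesis by auto
  qed
  have "d = 1" using gen dD dvdD ED by blast
  hence oneD: "1 \<in> D" using dD by simp
  obtain w0 where w0: "w0 \<in> P" using ne by blast
  have up: "w0 + int j \<in> P" for j
  proof (induction j)
    case 0 then show ?case using w0 by simp
  next
    case (Suc j)
    have "w0 + int j + 1 \<in> P" using Suc oneD unfolding D_def by blast
    then show ?case by (simp add: algebra_simps)
  qed

  have "z - w0 = (z - w0) mod n + n * ((z - w0) div n)" by simp
  hence "z = (w0 + int (nat ((z - w0) mod n))) + n * ((z - w0) div n)" using n by simp
  moreover have "w0 + int (nat ((z - w0) mod n)) + n * ((z - w0) div n) \<in> P" using per[OF up] by blast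
  ultimately show ?thesis by metis
qed



lemma gen_one:
  fixes lam :: "nat \<Rightarrow> int" and L :: "nat set" and A :: "int set"
  assumes n: "n = Gcd (lam ` L)" "n > 0" and red: "reduced A" and b0: "b0 \<in> A"
    and d: "d > 0" and dv: "\<forall>l\<in>L. \<forall>a\<in>A. d dvd (lam l div n) * (a - b0)"
  shows "d = 1"
proof -
  have ndv: "n dvd lam l" if "l \<in> L" for l using n that by auto
  have "d dvd (a - b0)" if a: "a \<in> A" for a
  proof -
    have "d * n dvd lam l * (a - b0)" if l: "l \<in> L" for l
    proof -
      have "lam l = n * (lam l div n)" using ndv[OF l] by simp
      hence "lam l * (a - b0) = n * ((lam l div n) * (a - b0))" by (metis mult.assoc)
      thus ?thesis using dv l a by (metis mult.commute mult_dvd_mono dvd_refl)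
    qed
    hence "d * n dvd Gcd ((*) (a - b0) ` (lam ` L))"
      by (intro Gcd_greatest) (auto simp: mult.commute)
    also have "Gcd ((*) (a - b0) ` (lam ` L)) = normalize ((a - b0) * n)"
      using n by (simp add: Gcd_mult)
    finally have "d * n dvd (a - b0) * n" by simp
    thus ?thesis using n(2) by (metis dvd_mult_cancel_right less_irrefl)
  qed
  show "d = 1"
  proof (rule ccontr)
    assume "d \<noteq> 1"
    hence "d \<ge> 2" using d by simp
    moreover have "A \<subseteq> {x. [x = b0] (mod d)}"
      using \<open>\<And>a. a \<in> A \<Longrightarrow> d dvd (a - b0)\<close> by (auto simp: cong_iff_dvd_diff)
    ultimately show False using red unfolding reduced_def by blast
  qed
qed

lemma mod_decomp: "(x::int) mod n = r \<Longrightarrow> x = r + n * ((x - r) div n)"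
proof -
  assume h: "x mod n = r"
  have "x - r = n * (x div n)" using h div_mult_mod_eq[of x n] by (simp add: algebra_simps)
  thus ?thesis by (cases "n = 0") auto
qed


theorem mainTheorem3:
  fixes k :: nat and lam :: "nat \<Rightarrow> int" and A :: "int set"
    and g :: "nat \<Rightarrow> int" and i :: nat and r :: int
  assumes "k \<ge> 2"
    and "\<forall>l\<in>{1..k}. lam l \<noteq> 0"
    and "Gcd (lam ` {1..k}) = 1"
    and g_def: "\<forall>l\<in>{1..k}. g l = Gcd (lam ` ({1..k} - {l}))"
    and "finite A" and "reduced A"
    and "i \<in> {1..k}"
    and "0 \<le> r" and "r < g i"
    and "{x \<in> A. x mod g i = r} \<noteq> {}"
  shows "fully_distributed ((\<lambda>x. (x - r) div g i) ` {x \<in> A. x mod g i = r}) (g i)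
      \<or> card (msum k (\<lambda>l. dilate (lam l) (if l = i then {x \<in> A. x mod g i = r} else A)))
        \<ge> card (msum k (\<lambda>l. dilate (lam l) {x \<in> A. x mod g i = r}))
          + Min {card {x \<in> A. x mod g i = s} | s. 0 \<le> s \<and> s < g i \<and> {x \<in> A. x mod g i = s} \<noteq> {}}"
proof -
  note assms = assms
  define n where "n = g i"
  define B where "B = {x \<in> A. x mod n = r}"
  define L where "L = {1..k} - {i}"
  define S where "S = msum k (\<lambda>l. dilate (lam l) (if l = i then B else A))"
  define T where "T = msum k (\<lambda>l. dilate (lam l) B)"
  have npos: "n > 0" using assms(8,9) n_def by simp
  have BA: "B \<subseteq> A" unfolding B_def by auto
  have Bne: "B \<noteq> {}" using assms(10) unfolding B_def n_def by simp
  have ng: "n = Gcd (lam ` L)" using g_def assms(7) unfolding n_def L_def by simp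
  have ndv: "n dvd lam l" if "l \<in> L" for l using ng that by auto
  have cop: "coprime (lam i) n"
  proof (rule coprimeI)
    fix c assume c1: "c dvd lam i" and c2: "c dvd n"
    have "c dvd lam l" if "l \<in> {1..k}" for l
    proof (cases "l = i")
      case True then show ?thesis using c1 by simp
    next
      case False then show ?thesis using c2 ndv[of l] that unfolding L_def by (meson DiffI dvd_trans singletonD)
    qed
    hence "c dvd Gcd (lam ` {1..k})" by (intro Gcd_greatest) auto
    thus "is_unit c" using assms(3) by simp
  qed
  have Bdec: "b = r + n * ((b - r) div n)" if "b \<in> B" for b
    using that mod_decomp unfolding B_def by blast
  have Bdv: "n dvd b - b'" if "b \<in> B" "b' \<in> B" for b b'
    using that unfolding B_def by (simp add: mod_eq_dvd_iff[symmetric])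
  have key: "fully_distributed ((\<lambda>x. (x - r) div n) ` B) n"
    if hyp: "\<forall>x\<in>S. \<exists>t\<in>T. [x = t] (mod n*n)"
  proof -
    obtain b0 where b0: "b0 \<in> B" using Bne by blast
    define P where "P = {w. \<exists>b\<in>B. [w = lam i * ((b - r) div n)] (mod n)}"
    define E where "E = {(lam l div n) * (a - b0) | l a. l \<in> L \<and> a \<in> A}"
    have allP: "z \<in> P" for z
    proof (rule closure_all[OF npos, of P E])
      fix w m assume "w \<in> P"
      then obtain b where b1: "b \<in> B" and b2: "[w = lam i * ((b - r) div n)] (mod n)" unfolding P_def by blast
      have "[w + n * m = w] (mod n)" by (simp add: cong_iff_dvd_diff)
      hence "[w + n * m = lam i * ((b - r) div n)] (mod n)" using b2 by (rule cong_trans)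
      thus "w + n * m \<in> P" unfolding P_def using b1 by blast
    next
      fix w e assume w: "w \<in> P" and e: "e \<in> E"
      then obtain b where b: "b \<in> B" and wb: "[w = lam i * ((b - r) div n)] (mod n)" unfolding P_def by blast
      from e obtain l a where l: "l \<in> L" and a: "a \<in> A" and ee: "e = (lam l div n) * (a - b0)"
        unfolding E_def by blast
      have li: "l \<noteq> i" "l \<in> {1..k}" using l unfolding L_def by auto
      define c where "c = (\<lambda>l'. if l' = i then b else b0)(l := a)"
      define x where "x = (\<Sum>l'=1..k. lam l' * c l')"
      have "x \<in> S" unfolding S_def msum_dilate x_def
        using b b0 a BA li by (intro exI[of _ c]) (auto simp: c_def)
      then obtain t where t: "t \<in> T" and xt: "[x = t] (mod n*n)" using hyp by blast
      then obtain c' where c': "\<forall>l'\<in>{1..k}. c' l' \<in> B" and tc: "t = (\<Sum>l'=1..k. lam l' * c' l')"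
        unfolding T_def msum_dilate by blast
      define h where "h = (\<lambda>l'. (if l' = l then lam l * (a - b0) else 0) + (if l' = i then lam i * (b - c' i) else 0))"
      have xt2: "x - t = (\<Sum>l'=1..k. lam l' * (c l' - c' l'))"
        unfolding x_def tc by (simp add: sum_subtractf[symmetric] algebra_simps)
      have sh: "(\<Sum>l'=1..k. h l') = lam l * (a - b0) + lam i * (b - c' i)"
        unfolding h_def using li assms(7) by (simp add: sum.distrib)
      have "n * n dvd (\<Sum>l'=1..k. lam l' * (c l' - c' l') - h l')"
      proof (rule dvd_sum)
        fix l' assume l': "l' \<in> {1..k}"
        show "n * n dvd lam l' * (c l' - c' l') - h l'"
        proof (cases "l' = i")
          case True then show ?thesis using li by (simp add: h_def c_def)
        next
          case False
          hence l'L: "l' \<in> L" using l' unfolding L_def by blast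
          have "lam l' * (c l' - c' l') - h l' = lam l' * (b0 - c' l')"
            using False by (auto simp: h_def c_def algebra_simps)
          moreover have "n dvd b0 - c' l'" using Bdv b0 c' l' by blast
          ultimately show ?thesis using ndv[OF l'L] by (simp add: mult_dvd_mono)
        qed
      qed
      hence dA: "n * n dvd (x - t) - (lam l * (a - b0) + lam i * (b - c' i))"
        unfolding xt2 sh[symmetric] by (simp add: sum_subtractf)
      have dB: "n * n dvd x - t" using xt by (simp add: cong_iff_dvd_diff)
      have "lam l * (a - b0) + lam i * (b - c' i) = (x - t) - ((x - t) - (lam l * (a - b0) + lam i * (b - c' i)))"
        by simp
      hence d1: "n * n dvd lam l * (a - b0) + lam i * (b - c' i)"
        using dvd_diff[OF dB dA] by metis
      define \<beta> where "\<beta> = (b - r) div n"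
      define \<beta>' where "\<beta>' = (c' i - r) div n"
      have ci: "c' i \<in> B" using c' assms(7) by blast
      obtain \<mu> where mu: "lam l = n * \<mu>" using ndv[OF l] by (elim dvdE)
      have mu2: "lam l div n = \<mu>" using mu npos by simp
      have e1: "b = r + n * \<beta>" using Bdec[OF b] unfolding \<beta>_def .
      have e2: "c' i = r + n * \<beta>'" using Bdec[OF ci] unfolding \<beta>'_def .
      have "lam l * (a - b0) + lam i * (b - c' i) = n * ((lam l div n) * (a - b0) + lam i * (\<beta> - \<beta>'))"
        unfolding mu2 mu e1 e2 by (simp add: algebra_simps)
      with d1 have "n * n dvd n * ((lam l div n) * (a - b0) + lam i * (\<beta> - \<beta>'))" by simp
      hence "n dvd (lam l div n) * (a - b0) + lam i * (\<beta> - \<beta>')"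
        using npos by simp
      hence "[lam i * \<beta> + e = lam i * \<beta>'] (mod n)"
        unfolding ee by (simp add: cong_iff_dvd_diff algebra_simps)
      moreover have "[w + e = lam i * \<beta> + e] (mod n)" using wb unfolding \<beta>_def by (simp add: cong_add)
      ultimately have "[w + e = lam i * \<beta>'] (mod n)" using cong_trans by blast
      thus "w + e \<in> P" unfolding P_def \<beta>'_def using ci by blast
    next
      fix d :: int assume "d > 0" "\<forall>e\<in>E. d dvd e"
      hence "\<forall>l\<in>L. \<forall>a\<in>A. d dvd (lam l div n) * (a - b0)" unfolding E_def by blast
      then show "d = 1" using gen_one[OF ng npos assms(6)] b0 BA \<open>d > 0\<close> by blast
    next
      have "lam i * ((b0 - r) div n) \<in> P" unfolding P_def using b0 cong_refl by blast
      thus "P \<noteq> {}" by blast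
    qed
    show ?thesis unfolding fully_distributed_def
    proof
      fix z
      from allP[of "lam i * z"] obtain b where b: "b \<in> B" and "[lam i * z = lam i * ((b - r) div n)] (mod n)"
        unfolding P_def by blast
      hence "[(b - r) div n = z] (mod n)" using cong_mult_lcancel[OF cop] cong_sym by blast
      thus "\<exists>a\<in>(\<lambda>x. (x - r) div n) ` B. [a = z] (mod n)" using b by blast
    qed
  qed
  have fin: "finite S" unfolding S_def using assms(5) BA
    by (intro msum_finite) (auto simp: dilate_def intro: finite_subset)
  have TS: "T \<subseteq> S" unfolding T_def S_def using BA by (auto simp: msum_dilate) blast
  have cardineq: "card S \<ge> card T + Min {card {x \<in> A. x mod n = s} | s. 0 \<le> s \<and> s < n \<and> {x \<in> A. x mod n = s} \<noteq> {}}"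
    if nfd: "\<not> fully_distributed ((\<lambda>x. (x - r) div n) ` B) n"
  proof -
    obtain x where xS: "x \<in> S" and xT: "\<forall>t\<in>T. \<not> [x = t] (mod n*n)" using key nfd by blast
    then obtain a where a: "\<forall>l\<in>{1..k}. a l \<in> (if l = i then B else A)" and xa: "x = (\<Sum>l=1..k. lam l * a l)"
      unfolding S_def msum_dilate by blast
    define l0 where "l0 = (if i = 1 then 2 else (1::nat))"
    have l0: "l0 \<in> {1..k}" "l0 \<noteq> i" "l0 \<in> L" using assms(1,7) unfolding l0_def L_def by auto
    have "a l0 \<in> (if l0 = i then B else A)" using a l0(1) by blast
    hence al0: "a l0 \<in> A" using l0(2) by simp
    define s where "s = a l0 mod n"
    define C where "C = {y \<in> A. y mod n = s}"
    define hf where "hf = (\<lambda>y. x + lam l0 * (y - a l0))"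
    have hS: "hf y \<in> S" if y: "y \<in> C" for y
    proof -
      have sumeq: "(\<Sum>l=1..k. lam l * (a(l0 := y)) l) = (\<Sum>l=1..k. lam l * a l) + lam l0 * (y - a l0)"
      proof -
        have fk: "finite {1..k}" by simp
        have s1: "(\<Sum>l=1..k. lam l * (a(l0 := y)) l) = lam l0 * (a(l0 := y)) l0 + (\<Sum>l\<in>{1..k} - {l0}. lam l * (a(l0 := y)) l)"
          by (rule sum.remove[OF fk l0(1)])
        have s2: "lam l0 * (a(l0 := y)) l0 = lam l0 * y" by simp
        have s3: "(\<Sum>l\<in>{1..k} - {l0}. lam l * (a(l0 := y)) l) = (\<Sum>l\<in>{1..k} - {l0}. lam l * a l)"
          by (rule sum.cong) auto
        have s4: "(\<Sum>l=1..k. lam l * a l) = lam l0 * a l0 + (\<Sum>l\<in>{1..k} - {l0}. lam l * a l)"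
          by (rule sum.remove[OF fk l0(1)])
        show ?thesis unfolding s1 s2 s3 s4 by (simp add: algebra_simps)
      qed
      have mem: "\<forall>l\<in>{1..k}. (a(l0 := y)) l \<in> (if l = i then B else A)"
      proof
        fix l assume l: "l \<in> {1..k}"
        show "(a(l0 := y)) l \<in> (if l = i then B else A)"
        proof (cases "l = l0")
          case True then show ?thesis using y l0(2) unfolding C_def by simp
        next
          case False then show ?thesis using a l by simp
        qed
      qed
      have "hf y = (\<Sum>l=1..k. lam l * (a(l0 := y)) l)" unfolding sumeq hf_def xa by simp
      thus ?thesis unfolding S_def msum_dilate using mem by blast
    qed
    have hT: "hf y \<notin> T" if y: "y \<in> C" for y
    proof
      assume "hf y \<in> T"
      moreover have "n dvd y - a l0" using y unfolding C_def s_def by (simp add: mod_eq_dvd_iff[symmetric])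
      hence "n * n dvd lam l0 * (y - a l0)" using ndv[OF l0(3)] by (simp add: mult_dvd_mono)
      hence "[x = hf y] (mod n*n)" unfolding hf_def by (simp add: cong_iff_dvd_diff)
      ultimately show False using xT by blast
    qed
    have inj: "inj_on hf C" unfolding hf_def inj_on_def using assms(2) l0(1) by auto
    have finC: "finite C" unfolding C_def using assms(5) by simp
    have "card T + card C = card (T \<union> hf ` C)"
      using hT fin TS finite_subset card_image[OF inj] finC
      by (subst card_Un_disjoint) (auto intro: finite_subset)
    also have "\<dots> \<le> card S" using hS TS fin by (intro card_mono) auto
    finally have c1: "card T + card C \<le> card S" .
    have mC: "card C \<in> {card {x \<in> A. x mod n = s} | s. 0 \<le> s \<and> s < n \<and> {x \<in> A. x mod n = s} \<noteq> {}}"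
      unfolding C_def s_def using npos al0 by auto
    have fM: "finite {card {x \<in> A. x mod n = s} | s. 0 \<le> s \<and> s < n \<and> {x \<in> A. x mod n = s} \<noteq> {}}"
      by (rule finite_subset[of _ "(\<lambda>s. card {x \<in> A. x mod n = s}) ` {0..<n}"]) auto
    have "Min {card {x \<in> A. x mod n = s} | s. 0 \<le> s \<and> s < n \<and> {x \<in> A. x mod n = s} \<noteq> {}} \<le> card C"
      by (rule Min_le[OF fM mC])
    with c1 show ?thesis by simp
  qed
  show ?thesis using cardineq unfolding S_def T_def B_def n_def by blast
qed

end
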